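(* Let $T$ be a tree, $(X_\gamma)_{\gamma\in\Gamma_T}$ a $\mathbf{P}_t$-chain on $T$, $s>0$, and let $x_1,\dots,x_m$ be distinct points of $\Gamma_T$ each at distance exactly $s$ from the root. For $i\in\mathcal{S}$ let $S_i=|\{r:X_{x_r}=i\}|$. Then $\mathbb{E}^i[S_i]=p_{ii}(s)m$ and for every $\delta>0$, $$\mathbb{P}^i\big[|S_i-\mathbb{E}^i[S_i]|>\delta m\big]\le\frac{1-e^{-q_is}}{\delta^2}.$$
   Context: A tree $T=(V,E,\rho,\ell)$ is a finite rooted tree with positive edge lengths, viewed as a metric object with point set $\Gamma_T$; distance from the root to a point is the length of the path from $\rho$. Markov process on countable $\mathcal{S}$ with transition matrices $\mathbf{P}_t=(p_{ij}(t))$ and stable conservative $Q$-matrix, $q_i=-q_{ii}=\sum_{j\ne i}q_{ij}<\infty$. A $\mathbf{P}_t$-chain on $T$: root state $X_\rho$, then along each edge $(u,v)$ run the chain from $X_u$ for time $\ell_{(u,v)}$, independently on outgoing edges given the branching state, $X_\gamma$ being the state at point $\gamma$; $\mathbb{P}^i,\mathbb{E}^i$ refer to root state $i$. *)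

theory Defs
  imports "HOL-Probability.Probability"
begin

text \<open>P t i j = p_ij(t) for t >= 0 (values at t < 0 are irrelevant);
  Q i j = q_ij = right derivative of p_ij at 0 (finite, i.e. stable);
  conservative: sum over j ~= i of q_ij equals q_i = - q_ii.\<close>

definition markov_transition :: "(real \<Rightarrow> 'a::countable \<Rightarrow> 'a \<Rightarrow> real) \<Rightarrow> ('a \<Rightarrow> 'a \<Rightarrow> real) \<Rightarrow> bool" where
  "markov_transition P Q \<longleftrightarrow>
     (\<forall>t\<ge>0. \<forall>i j. P t i j \<ge> 0) \<and>
     (\<forall>t\<ge>0. \<forall>i. ((\<lambda>j. P t i j) has_sum 1) UNIV) \<and>
     (\<forall>i j. P 0 i j = (if i = j then 1 else 0)) \<and>
     (\<forall>s\<ge>0. \<forall>t\<ge>0. \<forall>i k. ((\<lambda>j. P s i j * P t j k) has_sum P (s + t) i k) UNIV) \<and>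
     (\<forall>i j. ((\<lambda>t. P t i j) has_real_derivative Q i j) (at_right 0)) \<and>
     (\<forall>i. ((\<lambda>j. Q i j) has_sum (- Q i i)) (UNIV - {i}))"

definition qrate :: "('a \<Rightarrow> 'a \<Rightarrow> real) \<Rightarrow> 'a \<Rightarrow> real" where
  "qrate Q i = - Q i i"

text \<open>A finite rooted tree given by a parent map: every non-root vertex v has parent
  par v, the edge (par v, v) has length l v > 0, and iterating par reaches the root.\<close>

definition rooted_tree :: "'v set \<Rightarrow> 'v \<Rightarrow> ('v \<Rightarrow> 'v) \<Rightarrow> ('v \<Rightarrow> real) \<Rightarrow> bool" where
  "rooted_tree V \<rho> par l \<longleftrightarrow> finite V \<and> \<rho> \<in> V \<and> par \<rho> = \<rho> \<and>
     (\<forall>v\<in>V - {\<rho>}. par v \<in> V \<and> l v > 0 \<and> (\<exists>n. (par ^^ n) v = \<rho>))"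

text \<open>Points of Gamma_T: the root (rho, 0), and (v, t) with 0 < t <= l v, the point on
  the edge (par v, v) at distance t from par v (so (v, l v) is the vertex v).\<close>

definition tree_points :: "'v set \<Rightarrow> 'v \<Rightarrow> ('v \<Rightarrow> real) \<Rightarrow> ('v \<times> real) set" where
  "tree_points V \<rho> l = insert (\<rho>, 0) {(v, t). v \<in> V - {\<rho>} \<and> 0 < t \<and> t \<le> l v}"

definition vdepth :: "'v \<Rightarrow> ('v \<Rightarrow> 'v) \<Rightarrow> ('v \<Rightarrow> real) \<Rightarrow> 'v \<Rightarrow> real" where
  "vdepth \<rho> par l v = (\<Sum>k<(LEAST n. (par ^^ n) v = \<rho>). l ((par ^^ k) v))"

definition pdist :: "'v \<Rightarrow> ('v \<Rightarrow> 'v) \<Rightarrow> ('v \<Rightarrow> real) \<Rightarrow> 'v \<times> real \<Rightarrow> real" where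
  "pdist \<rho> par l \<gamma> = (if fst \<gamma> = \<rho> then 0 else vdepth \<rho> par l (par (fst \<gamma>)) + snd \<gamma>)"

text \<open>Genealogical order: g is on the path from the root to g'.\<close>
definition pt_le :: "('v \<Rightarrow> 'v) \<Rightarrow> 'v \<times> real \<Rightarrow> 'v \<times> real \<Rightarrow> bool" where
  "pt_le par g g' \<longleftrightarrow> (fst g = fst g' \<and> snd g \<le> snd g') \<or> (\<exists>n\<ge>1. (par ^^ n) (fst g') = fst g)"

definition meet_closed :: "'v set \<Rightarrow> 'v \<Rightarrow> ('v \<Rightarrow> 'v) \<Rightarrow> ('v \<Rightarrow> real) \<Rightarrow> ('v \<times> real) set \<Rightarrow> bool" where
  "meet_closed V \<rho> par l W \<longleftrightarrow>
     (\<forall>a\<in>W. \<forall>b\<in>W. \<exists>c\<in>W. pt_le par c a \<and> pt_le par c b \<and>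
        (\<forall>d\<in>tree_points V \<rho> l. pt_le par d a \<and> pt_le par d b \<longrightarrow> pt_le par d c))"

definition parent_in :: "('v \<Rightarrow> 'v) \<Rightarrow> ('v \<times> real) set \<Rightarrow> 'v \<times> real \<Rightarrow> 'v \<times> real" where
  "parent_in par W w = (THE u. u \<in> W \<and> pt_le par u w \<and> u \<noteq> w \<and>
       (\<forall>u'\<in>W. pt_le par u' w \<and> u' \<noteq> w \<longrightarrow> pt_le par u' u))"

text \<open>X is a P_t-chain on the tree under P^i (root state i): for every finite set W of
  points containing the root and closed under meets, the joint law of (X_w)_{w in W} is
  the root point mass at i times the product of transition probabilities along the
  edges of the subtree spanned by W.  This determines all finite-dimensional
  distributions, which is what the construction in the paper yields.\<close>

definition tree_chain :: "'v set \<Rightarrow> 'v \<Rightarrow> ('v \<Rightarrow> 'v) \<Rightarrow> ('v \<Rightarrow> real) \<Rightarrow>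
    (real \<Rightarrow> 'a \<Rightarrow> 'a \<Rightarrow> real) \<Rightarrow> 'a \<Rightarrow> 'w measure \<Rightarrow> ('v \<times> real \<Rightarrow> 'w \<Rightarrow> 'a) \<Rightarrow> bool" where
  "tree_chain V \<rho> par l P i M X \<longleftrightarrow>
     prob_space M \<and>
     (\<forall>\<gamma>\<in>tree_points V \<rho> l. X \<gamma> \<in> measurable M (count_space UNIV)) \<and>
     (\<forall>W. finite W \<and> W \<subseteq> tree_points V \<rho> l \<and> (\<rho>, 0) \<in> W \<and> meet_closed V \<rho> par l W \<longrightarrow>
        (\<forall>a. measure M {\<omega> \<in> space M. \<forall>w\<in>W. X w \<omega> = a w} =
             (if a (\<rho>, 0) = i then 1 else 0) *
             (\<Prod>w\<in>W - {(\<rho>, 0)}.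
                P (pdist \<rho> par l w - pdist \<rho> par l (parent_in par W w))
                  (a (parent_in par W w)) (a w))))"

definition occ :: "('p \<Rightarrow> 'w \<Rightarrow> 'a) \<Rightarrow> (nat \<Rightarrow> 'p) \<Rightarrow> nat \<Rightarrow> 'a \<Rightarrow> 'w \<Rightarrow> real" where
  "occ X x m i \<omega> = real (card {r \<in> {1..m}. X (x r) \<omega> = i})"

end

theory Submission imports Defs begin

lemma single_le_has_sum:
  fixes f :: "'a \<Rightarrow> real"
  assumes "(f has_sum S) UNIV" "\<And>j. f j \<ge> 0"
  shows "f k \<le> S"
proof -
  have "(f has_sum sum f {k}) {k}" by (rule has_sum_finite) simp
  then have "(f has_sum f k) {k}" by simp
  then show ?thesis using has_sum_mono_neutral[OF _ assms(1)] assms(2) by auto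
qed

lemma mt_facts:
  assumes "markov_transition P Q"
  shows "\<And>t i j. t \<ge> 0 \<Longrightarrow> P t i j \<ge> 0"
    and "\<And>t i. t \<ge> 0 \<Longrightarrow> P t i i \<le> 1"
    and "\<And>a b i. a \<ge> 0 \<Longrightarrow> b \<ge> 0 \<Longrightarrow> P a i i * P b i i \<le> P (a + b) i i"
    and "\<And>i. P 0 i i = 1"
    and "\<And>i. ((\<lambda>t. P t i i) has_real_derivative Q i i) (at_right 0)"
proof -
  note d = assms[unfolded markov_transition_def]
  show nn: "\<And>t i j. t \<ge> 0 \<Longrightarrow> P t i j \<ge> 0" using d by blast
  show "\<And>t i. t \<ge> 0 \<Longrightarrow> P t i i \<le> 1"
    using d nn by (meson single_le_has_sum)
  show "\<And>i. P 0 i i = 1" using d by simp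
  show "\<And>i. ((\<lambda>t. P t i i) has_real_derivative Q i i) (at_right 0)" using d by blast
  fix a b :: real and i
  assume ab: "a \<ge> 0" "b \<ge> 0"
  have hs: "((\<lambda>j. P a i j * P b j i) has_sum P (a + b) i i) UNIV" using d ab by blast
  show "P a i i * P b i i \<le> P (a + b) i i"
    using single_le_has_sum[OF hs, of i] nn ab by (simp add: mult_nonneg_nonneg)
qed

lemma pow_le:
  assumes "markov_transition P Q" "h \<ge> 0"
  shows "P h i i ^ n \<le> P (real n * h) i i"
proof (induction n)
  case 0 then show ?case using mt_facts(4)[OF assms(1)] by simp
next
  case (Suc n)
  have "P h i i ^ Suc n = P h i i ^ n * P h i i" by simp
  also have "\<dots> \<le> P (real n * h) i i * P h i i"
    using Suc mt_facts(1)[OF assms(1) assms(2)] by (simp add: mult_right_mono)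
  also have "\<dots> \<le> P (real n * h + h) i i"
    using mt_facts(3)[OF assms(1)] assms(2) by simp
  finally show ?case by (simp add: algebra_simps)
qed

lemma exp_lower_eps:
  assumes "markov_transition P Q" "t > 0" "e > 0"
  shows "exp ((Q i i - e) * t) \<le> P t i i"
proof -
  have D: "((\<lambda>h. (P h i i - P 0 i i) / (h - 0)) \<longlongrightarrow> Q i i) (at_right 0)"
    using mt_facts(5)[OF assms(1), of i] by (simp add: has_field_derivative_iff)
  then have "eventually (\<lambda>h. dist ((P h i i - P 0 i i) / (h - 0)) (Q i i) < e) (at_right 0)"
    using assms(3) by (simp only: tendsto_iff)
  then obtain b where b: "b > 0" and bb: "\<And>h. h > 0 \<Longrightarrow> h < b \<Longrightarrow> dist ((P h i i - 1) / h) (Q i i) < e"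
    using mt_facts(4)[OF assms(1)] by (auto simp: eventually_at_right_field)
  define c where "c = (Q i i - e) * t"
  have ev: "\<forall>n\<ge>nat \<lceil>t / b\<rceil> + nat \<lceil>\<bar>c\<bar>\<rceil> + 1. (1 + c / real n) ^ n \<le> P t i i"
  proof (intro allI impI)
    fix n :: nat assume n: "nat \<lceil>t / b\<rceil> + nat \<lceil>\<bar>c\<bar>\<rceil> + 1 \<le> n"
    have npos: "real n > 0" using n by simp
    have "t / b < real n" using n by linarith
    then have hb: "t / real n < b" using b npos by (simp add: divide_less_eq mult.commute pos_divide_less_eq)
    have hpos: "t / real n > 0" using assms npos by simp
    have "dist ((P (t / real n) i i - 1) / (t / real n)) (Q i i) < e" using bb hb hpos by blast
    then have "(P (t / real n) i i - 1) / (t / real n) > Q i i - e" by (simp add: dist_real_def)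
    then have "P (t / real n) i i - 1 > (Q i i - e) * (t / real n)"
      using hpos pos_less_divide_eq by blast
    then have lb: "1 + c / real n \<le> P (t / real n) i i" by (simp add: c_def)
    have "\<bar>c\<bar> < real n" using n by linarith
    then have "0 \<le> 1 + c / real n" using npos by (simp add: field_simps abs_less_iff)
    then have "(1 + c / real n) ^ n \<le> P (t / real n) i i ^ n" using lb by (simp add: power_mono)
    also have "\<dots> \<le> P (real n * (t / real n)) i i" using pow_le[OF assms(1), of "t / real n" i n] hpos by simp
    also have "real n * (t / real n) = t" using npos by simp
    finally show "(1 + c / real n) ^ n \<le> P t i i" .
  qed
  show ?thesis unfolding c_def[symmetric]
    by (rule LIMSEQ_le_const2[OF tendsto_exp_limit_sequentially]) (use ev in blast)
qed

lemma exp_lower: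
  assumes "markov_transition P Q" "t > 0"
  shows "exp (Q i i * t) \<le> P t i i"
proof -
  have L: "(\<lambda>n. exp ((Q i i - inverse (real (Suc n))) * t)) \<longlonglongrightarrow> exp ((Q i i - 0) * t)"
    by (intro tendsto_intros LIMSEQ_inverse_real_of_nat)
  have "exp ((Q i i - 0) * t) \<le> P t i i"
    by (rule LIMSEQ_le_const2[OF L]) (use exp_lower_eps[OF assms] in auto)
  then show ?thesis by simp
qed


lemma tc_W:
  assumes "tree_chain V \<rho> par l P i M X" "finite W" "W \<subseteq> tree_points V \<rho> l" "(\<rho>, 0) \<in> W"
    "meet_closed V \<rho> par l W"
  shows "measure M {\<omega> \<in> space M. \<forall>w\<in>W. X w \<omega> = a w} =
             (if a (\<rho>, 0) = i then 1 else 0) *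
             (\<Prod>w\<in>W - {(\<rho>, 0)}.
                P (pdist \<rho> par l w - pdist \<rho> par l (parent_in par W w))
                  (a (parent_in par W w)) (a w))"
  using assms unfolding tree_chain_def by blast

lemma root_prob:
  assumes "tree_chain V \<rho> par l P i M X"
  shows "measure M {\<omega> \<in> space M. X (\<rho>, 0) \<omega> = i} = 1"
proof -
  have mc: "meet_closed V \<rho> par l {(\<rho>, 0)}"
    unfolding meet_closed_def pt_le_def by auto
  have tp: "(\<rho>, 0) \<in> tree_points V \<rho> l" by (simp add: tree_points_def)
  have "measure M {\<omega> \<in> space M. \<forall>w\<in>{(\<rho>, 0)}. X w \<omega> = (\<lambda>_. i) w} = 1"
    using tc_W[OF assms, of "{(\<rho>, 0)}" "\<lambda>_. i"] mc tp by simp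
  then show ?thesis by simp
qed

lemma point_prob:
  assumes rt: "rooted_tree V \<rho> par l" and tc: "tree_chain V \<rho> par l P i M X"
    and y: "y \<in> tree_points V \<rho> l" "pdist \<rho> par l y = s" and s: "s > 0"
  shows "measure M {\<omega> \<in> space M. X (\<rho>, 0) \<omega> = i \<and> X y \<omega> = i} = P s i i"
proof -
  obtain v t where yv: "y = (v, t)" by (cases y)
  have yne: "y \<noteq> (\<rho>, 0)" using y s by (auto simp: pdist_def)
  then have v: "v \<in> V" "v \<noteq> \<rho>" using y(1) yv by (auto simp: tree_points_def)
  obtain n where n: "(par ^^ n) v = \<rho>" using rt v unfolding rooted_tree_def by blast
  have "n \<noteq> 0" using n v by (metis funpow_0)
  then have le: "pt_le par (\<rho>, 0) y" using n yv unfolding pt_le_def by (auto intro!: exI[of _ n])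
  have refl: "pt_le par a a" for a unfolding pt_le_def by simp
  define W where "W = {(\<rho>, 0), y}"
  have mc: "meet_closed V \<rho> par l W"
    unfolding meet_closed_def W_def
  proof (intro ballI)
    fix a b assume a: "a \<in> {(\<rho>, 0), y}" and b: "b \<in> {(\<rho>, 0), y}"
    show "\<exists>c\<in>{(\<rho>, 0), y}. pt_le par c a \<and> pt_le par c b \<and>
         (\<forall>d\<in>tree_points V \<rho> l. pt_le par d a \<and> pt_le par d b \<longrightarrow> pt_le par d c)"
    proof (cases "a = y \<and> b = y")
      case True then show ?thesis using refl by auto
    next
      case False
      then have "a = (\<rho>, 0) \<or> b = (\<rho>, 0)" using a b by auto
      then show ?thesis using a b refl le by (intro bexI[of _ "(\<rho>, 0)"]) auto
    qed
  qed
  have tp: "(\<rho>, 0) \<in> tree_points V \<rho> l" by (simp add: tree_points_def)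
  have pin: "parent_in par W y = (\<rho>, 0)"
    unfolding parent_in_def W_def
  proof (rule the_equality)
    show "(\<rho>, 0) \<in> {(\<rho>, 0), y} \<and> pt_le par (\<rho>, 0) y \<and> (\<rho>, 0) \<noteq> y \<and>
      (\<forall>u'\<in>{(\<rho>, 0), y}. pt_le par u' y \<and> u' \<noteq> y \<longrightarrow> pt_le par u' (\<rho>, 0))"
      using le yne refl by auto
  next
    fix u assume "u \<in> {(\<rho>, 0), y} \<and> pt_le par u y \<and> u \<noteq> y \<and>
      (\<forall>u'\<in>{(\<rho>, 0), y}. pt_le par u' y \<and> u' \<noteq> y \<longrightarrow> pt_le par u' u)"
    then show "u = (\<rho>, 0)" by auto
  qed
  have pd0: "pdist \<rho> par l (\<rho>, 0) = 0" by (simp add: pdist_def)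
  have "W - {(\<rho>, 0)} = {y}" using yne W_def by auto
  have "measure M {\<omega> \<in> space M. \<forall>w\<in>W. X w \<omega> = (\<lambda>_. i) w} =
     (if i = i then 1 else 0) * (\<Prod>w\<in>W - {(\<rho>, 0)}.
                P (pdist \<rho> par l w - pdist \<rho> par l (parent_in par W w)) i i)"
  proof -
    have "W \<subseteq> tree_points V \<rho> l" "finite W" "(\<rho>, 0) \<in> W" using tp y(1) W_def by auto
    then show ?thesis using tc_W[OF tc _ _ _ mc, of "\<lambda>_. i"] by simp
  qed
  also have "\<dots> = P s i i" using \<open>W - {(\<rho>, 0)} = {y}\<close> pin pd0 y(2) by simp
  finally show ?thesis unfolding W_def by simp
qed


theorem mainTheorem9:
  fixes V :: "'v set" and \<rho> :: 'v and par :: "'v \<Rightarrow> 'v" and l :: "'v \<Rightarrow> real"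
    and P :: "real \<Rightarrow> 'a::countable \<Rightarrow> 'a \<Rightarrow> real" and Q :: "'a \<Rightarrow> 'a \<Rightarrow> real"
    and M :: "'w measure" and X :: "'v \<times> real \<Rightarrow> 'w \<Rightarrow> 'a"
    and i :: 'a and s :: real and m :: nat and x :: "nat \<Rightarrow> 'v \<times> real"
  assumes "rooted_tree V \<rho> par l"
    and "markov_transition P Q"
    and "tree_chain V \<rho> par l P i M X"
    and "s > 0"
    and "inj_on x {1..m}"
    and "\<forall>r\<in>{1..m}. x r \<in> tree_points V \<rho> l \<and> pdist \<rho> par l (x r) = s"
  shows "(\<integral>\<omega>. occ X x m i \<omega> \<partial>M) = P s i i * real m \<and>
    (\<forall>\<delta>>0. measure M {\<omega> \<in> space M.
        \<bar>occ X x m i \<omega> - (\<integral>\<omega>'. occ X x m i \<omega>' \<partial>M)\<bar> > \<delta> * real m}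
      \<le> (1 - exp (- qrate Q i * s)) / \<delta>\<^sup>2)"
proof -
  interpret prob_space M using assms(3) unfolding tree_chain_def by blast
  define p where "p = P s i i"
  define I where "I r \<omega> = (if X (x r) \<omega> = i then 1 else (0::real))" for r \<omega>
  define F where "F \<omega> = (\<Sum>r\<in>{1..m}. I r \<omega>)" for \<omega>
  have occF: "occ X x m i = F"
    by (rule ext) (simp add: occ_def F_def I_def sum.If_cases Int_def)
  have measX: "X (x r) \<in> measurable M (count_space UNIV)" if "r \<in> {1..m}" for r
    using assms(3,6) that unfolding tree_chain_def by blast
  have measI[measurable]: "I r \<in> borel_measurable M" if "r \<in> {1..m}" for r
  proof -
    have "I r = (\<lambda>v. if v = i then 1 else 0) \<circ> X (x r)" by (auto simp: I_def)
    then show ?thesis using measX[OF that] by (simp add: measurable_comp)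
  qed
  have setI: "{\<omega> \<in> space M. X (x r) \<omega> = i} \<in> sets M" if "r \<in> {1..m}" for r
    using measX[OF that] by measurable
  have rootsets: "{\<omega> \<in> space M. X (\<rho>, 0) \<omega> = i} \<in> sets M"
  proof -
    have "(\<rho>, 0) \<in> tree_points V \<rho> l" by (simp add: tree_points_def)
    then have "X (\<rho>, 0) \<in> measurable M (count_space UNIV)"
      using assms(3) unfolding tree_chain_def by blast
    then show ?thesis by measurable
  qed
  have probA: "prob {\<omega> \<in> space M. X (x r) \<omega> = i} = p" if r: "r \<in> {1..m}" for r
  proof -
    have ae: "AE \<omega> in M. \<omega> \<in> {\<omega> \<in> space M. X (\<rho>, 0) \<omega> = i}"
      using AE_prob_1 root_prob[OF assms(3)] by blast
    have "prob {\<omega> \<in> space M. X (x r) \<omega> = i} = prob {\<omega> \<in> space M. X (\<rho>, 0) \<omega> = i \<and> X (x r) \<omega> = i}"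
      by (rule measure_eq_AE) (use ae setI[OF r] rootsets in auto)
    also have "\<dots> = p" unfolding p_def
      using point_prob[OF assms(1,3)] assms(4,6) r by blast
    finally show ?thesis .
  qed
  have intI: "integrable M (I r)" if "r \<in> {1..m}" for r
    by (rule integrable_const_bound[where B=1]) (auto simp: I_def measI[OF that])
  have EI: "(\<integral>\<omega>. I r \<omega> \<partial>M) = p" if r: "r \<in> {1..m}" for r
  proof -
    have "(\<integral>\<omega>. I r \<omega> \<partial>M) = (\<integral>\<omega>. indicator {\<omega> \<in> space M. X (x r) \<omega> = i} \<omega> \<partial>M)"
      by (rule Bochner_Integration.integral_cong) (auto simp: I_def indicator_def)
    also have "\<dots> = p" using probA[OF r] setI[OF r] by (simp add: Int_absorb2)
    finally show ?thesis .
  qed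
  have EF: "(\<integral>\<omega>. F \<omega> \<partial>M) = p * real m"
    unfolding F_def using EI intI by (simp add: Bochner_Integration.integral_sum)
  have measF[measurable]: "F \<in> borel_measurable M"
    unfolding F_def using measI by (intro borel_measurable_sum) auto
  have Fb: "\<bar>F \<omega>\<bar> \<le> real m" for \<omega>
  proof -
    have "\<bar>F \<omega>\<bar> \<le> (\<Sum>r\<in>{1..m}. \<bar>I r \<omega>\<bar>)" unfolding F_def by (rule sum_abs)
    also have "\<dots> \<le> (\<Sum>r\<in>{1..m}. 1)" by (intro sum_mono) (simp add: I_def)
    finally show ?thesis by simp
  qed
  have p1: "p \<le> 1" using mt_facts(2)[OF assms(2)] assms(4) by (simp add: p_def)
  have pe: "exp (Q i i * s) \<le> p" using exp_lower[OF assms(2,4)] by (simp add: p_def)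
  define G where "G \<omega> = (\<Sum>r\<in>{1..m}. (1 - 2 * p) * I r \<omega> + p\<^sup>2) * real m" for \<omega>
  have pw: "(F \<omega> - p * real m)\<^sup>2 \<le> G \<omega>" for \<omega>
  proof -
    have "F \<omega> - p * real m = (\<Sum>r\<in>{1..m}. I r \<omega> - p)"
      unfolding F_def by (simp add: sum_subtractf)
    then have "(F \<omega> - p * real m)\<^sup>2 \<le> (\<Sum>r\<in>{1..m}. (I r \<omega> - p)\<^sup>2) * card {1..m}"
      using sum_squared_le_sum_of_squares by metis
    also have "(\<Sum>r\<in>{1..m}. (I r \<omega> - p)\<^sup>2) = (\<Sum>r\<in>{1..m}. (1 - 2 * p) * I r \<omega> + p\<^sup>2)"
      by (intro sum.cong) (auto simp: I_def power2_eq_square algebra_simps)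
    finally show ?thesis by (simp add: G_def)
  qed
  have intG: "integrable M G" unfolding G_def using intI by (intro integrable_mult_left integrable_sum integrable_add) auto
  have EG: "(\<integral>\<omega>. G \<omega> \<partial>M) = real m * real m * (p - p\<^sup>2)"
  proof -
    have "(\<integral>\<omega>. G \<omega> \<partial>M) = (\<Sum>r\<in>{1..m}. (\<integral>\<omega>. (1 - 2 * p) * I r \<omega> + p\<^sup>2 \<partial>M)) * real m"
      unfolding G_def using intI by (simp add: Bochner_Integration.integral_sum)
    also have "\<dots> = (\<Sum>r\<in>{1..m}. (1 - 2 * p) * p + p\<^sup>2) * real m"
      using intI EI by (intro arg_cong[where f="\<lambda>z. z * real m"] sum.cong) (simp_all add: prob_space)
    finally show ?thesis by (simp add: power2_eq_square algebra_simps)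
  qed
  have intsq: "integrable M (\<lambda>\<omega>. (F \<omega> - p * real m)\<^sup>2)"
  proof (rule integrable_const_bound[where B="(real m + \<bar>p * real m\<bar>)\<^sup>2"])
    show "AE \<omega> in M. norm ((F \<omega> - p * real m)\<^sup>2) \<le> (real m + \<bar>p * real m\<bar>)\<^sup>2"
    proof (intro AE_I2)
      fix \<omega>
      have "\<bar>F \<omega> - p * real m\<bar> \<le> real m + \<bar>p * real m\<bar>" using Fb[of \<omega>] by linarith
      then show "norm ((F \<omega> - p * real m)\<^sup>2) \<le> (real m + \<bar>p * real m\<bar>)\<^sup>2"
        by simp (metis abs_ge_zero power2_abs power_mono)
    qed
  qed simp
  have var: "(\<integral>\<omega>. (F \<omega> - p * real m)\<^sup>2 \<partial>M) \<le> real m * real m * (1 - exp (Q i i * s))"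
  proof -
    have "(\<integral>\<omega>. (F \<omega> - p * real m)\<^sup>2 \<partial>M) \<le> (\<integral>\<omega>. G \<omega> \<partial>M)"
      using intsq intG pw by (intro integral_mono) auto
    also have "\<dots> \<le> real m * real m * (1 - exp (Q i i * s))" unfolding EG
    proof (intro mult_left_mono)
      have "p - p\<^sup>2 \<le> 1 - p" using sum_squares_ge_zero[of "1 - p" 0] by (simp add: power2_eq_square algebra_simps)
      then show "p - p\<^sup>2 \<le> 1 - exp (Q i i * s)" using pe by linarith
    qed simp
    finally show ?thesis .
  qed
  have intF2: "integrable M (\<lambda>\<omega>. F \<omega> ^ 2)"
  proof (rule integrable_const_bound[where B="real m ^ 2"])
    show "AE \<omega> in M. norm (F \<omega> ^ 2) \<le> real m ^ 2"
      using Fb by (intro AE_I2) (simp, metis abs_ge_zero power2_abs power_mono)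
  qed simp
  have qr: "- qrate Q i * s = Q i i * s" by (simp add: qrate_def)
  show ?thesis
  proof (intro conjI allI impI)
    show "(\<integral>\<omega>. occ X x m i \<omega> \<partial>M) = P s i i * real m" using EF by (simp add: occF p_def)
  next
    fix \<delta> :: real assume d: "\<delta> > 0"
    have rhs: "0 \<le> (1 - exp (Q i i * s)) / \<delta>\<^sup>2" proof (rule divide_nonneg_nonneg)
      show "0 \<le> 1 - exp (Q i i * s)" using p1 pe by linarith
    qed simp
    show "measure M {\<omega> \<in> space M. \<bar>occ X x m i \<omega> - (\<integral>\<omega>'. occ X x m i \<omega>' \<partial>M)\<bar> > \<delta> * real m}
      \<le> (1 - exp (- qrate Q i * s)) / \<delta>\<^sup>2"
    proof (cases "m = 0")
      case True
      have e: "{\<omega> \<in> space M. \<bar>occ X x m i \<omega> - (\<integral>\<omega>'. occ X x m i \<omega>' \<partial>M)\<bar> > \<delta> * real m} = {}"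
        unfolding occF F_def using True by simp
      show ?thesis unfolding e qr using rhs by simp
    next
      case False
      then have a: "\<delta> * real m > 0" using d by simp
      have "measure M {\<omega> \<in> space M. \<bar>occ X x m i \<omega> - (\<integral>\<omega>'. occ X x m i \<omega>' \<partial>M)\<bar> > \<delta> * real m}
          \<le> prob {\<omega> \<in> space M. \<bar>F \<omega> - expectation F\<bar> \<ge> \<delta> * real m}"
        unfolding occF by (intro finite_measure_mono) auto
      also have "\<dots> \<le> variance F / (\<delta> * real m)\<^sup>2"
        by (rule Chebyshev_inequality[OF _ intF2 a]) simp
      also have "variance F = (\<integral>\<omega>. (F \<omega> - p * real m)\<^sup>2 \<partial>M)" using EF by simp
      also have "\<dots> / (\<delta> * real m)\<^sup>2 \<le> (real m * real m * (1 - exp (Q i i * s))) / (\<delta> * real m)\<^sup>2"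
        using var by (intro divide_right_mono) auto
      also have "\<dots> = (1 - exp (- qrate Q i * s)) / \<delta>\<^sup>2"
        using False qr by (simp add: power2_eq_square)
      finally show ?thesis .
    qed
  qed
qed

end
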